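(* Every consistent theory $x$ can be extended to a maximal consistent theory $y\supseteq x$.
   Context: Fix a finite set $A$ of agents and a countable set $P$ of propositional variables. The language $\mathcal{L}_{CoRGAL}$ is given by $\varphi ::= p \mid \neg\varphi \mid (\varphi\wedge\varphi) \mid K_a\varphi \mid [\varphi]\varphi \mid [G,\varphi]\varphi \mid [\langle G\rangle]\varphi$ with $p\in P$, $a\in A$, $G\subseteq A$. $\mathcal{L}_{EL}$ is the fragment built only from $p,\neg,\wedge,K_a$. Duals: $\langle\psi\rangle\varphi:=\neg[\psi]\neg\varphi$, $\langle G,\psi\rangle\varphi:=\neg[G,\psi]\neg\varphi$. $\mathcal{L}^G_{EL}$ is the set of formulas $\bigwedge_{i\in G}K_i\varphi_i$ with $\varphi_i\in\mathcal{L}_{EL}$; $\psi_G$ ranges over it. Necessity forms: $\eta ::= \sharp \mid \varphi\to\eta(\sharp)\mid K_a\eta(\sharp)\mid[\varphi]\eta(\sharp)$; $\sharp$ occurs exactly once and $\eta(\varphi)$ is the result of replacing $\sharp$ by $\varphi$. $\mathbf{CoRGAL}$ is the smallest set of formulas containing all instances of: (A0) propositional tautologies; (A1) $K_a(\varphi\to\psi)\to(K_a\varphi\to K_a\psi)$; (A2) $K_a\varphi\to\varphi$; (A3) $K_a\varphi\to K_aK_a\varphi$; (A4) $\neg K_a\varphi\to K_a\neg K_a\varphi$; (A5) $[\varphi]p\leftrightarrow(\varphi\to p)$; (A6) $[\varphi]\neg\psi\leftrightarrow(\varphi\to\neg[\varphi]\psi)$; (A7) $[\varphi](\psi\wedge\chi)\leftrightarrow([\varphi]\psi\wedge[\varphi]\chi)$;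 (A8) $[\varphi]K_a\psi\leftrightarrow(\varphi\to K_a[\varphi]\psi)$; (A9) $[\varphi][\psi]\chi\leftrightarrow[\varphi\wedge[\varphi]\psi]\chi$; (A10) $[G,\chi]\varphi\to\chi\wedge[\psi_G\wedge\chi]\varphi$ for any $\psi_G$; (A11) $[\langle G\rangle]\varphi\to\langle A\setminus G,\psi_G\rangle\varphi$ for any $\psi_G$; and closed under: (R0) modus ponens; (R1) from $\varphi$ infer $K_a\varphi$; (R2) from $\varphi$ infer $[\psi]\varphi$; (R3) from $\varphi$ infer $[G,\chi]\varphi$; (R4) from $\varphi$ infer $[\langle G\rangle]\varphi$; (R5) from $\eta(\chi\wedge[\psi_G\wedge\chi]\varphi)$ for all $\psi_G$ infer $\eta([G,\chi]\varphi)$; (R6) from $\eta(\langle A\setminus G,\psi_G\rangle\varphi)$ for all $\psi_G$ infer $\eta([\langle G\rangle]\varphi)$. A theory is a set of formulas containing $\mathbf{CoRGAL}$ and closed under (R0), (R5), (R6). A theory $x$ is consistent iff $\bot\notin x$, and maximal iff for every formula $\varphi$, $\varphi\in x$ or $\neg\varphi\in x$. *)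

theory Defs
  imports "HOL-Library.Countable"
begin

text \<open>Formulas of CoRGAL. Agents: a finite type 'a (A = UNIV); propositional
  variables: a countable type 'p.\<close>

datatype ('a, 'p) fm =
    Atom 'p
  | Neg "('a, 'p) fm"
  | Conj "('a, 'p) fm" "('a, 'p) fm"
  | K 'a "('a, 'p) fm"
  | Ann "('a, 'p) fm" "('a, 'p) fm"
  | GAnn "'a set" "('a, 'p) fm" "('a, 'p) fm"
  | Coal "'a set" "('a, 'p) fm"

definition Bot :: "('a, 'p) fm" where
  "Bot = Conj (Atom undefined) (Neg (Atom undefined))"

definition Top :: "('a, 'p) fm" where
  "Top = Neg Bot"

definition Imp :: "('a, 'p) fm \<Rightarrow> ('a, 'p) fm \<Rightarrow> ('a, 'p) fm" where
  "Imp a b = Neg (Conj a (Neg b))"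

definition Iff :: "('a, 'p) fm \<Rightarrow> ('a, 'p) fm \<Rightarrow> ('a, 'p) fm" where
  "Iff a b = Conj (Imp a b) (Imp b a)"

definition DAnn :: "('a, 'p) fm \<Rightarrow> ('a, 'p) fm \<Rightarrow> ('a, 'p) fm" where
  "DAnn a b = Neg (Ann a (Neg b))"

definition DGAnn :: "'a set \<Rightarrow> ('a, 'p) fm \<Rightarrow> ('a, 'p) fm \<Rightarrow> ('a, 'p) fm" where
  "DGAnn G a b = Neg (GAnn G a (Neg b))"

fun is_EL :: "('a, 'p) fm \<Rightarrow> bool" where
  "is_EL (Atom p) = True"
| "is_EL (Neg a) = is_EL a"
| "is_EL (Conj a b) = (is_EL a \<and> is_EL b)"
| "is_EL (K i a) = is_EL a"
| "is_EL _ = False"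

fun conj_list :: "('a, 'p) fm list \<Rightarrow> ('a, 'p) fm" where
  "conj_list [] = Top"
| "conj_list [a] = a"
| "conj_list (a # as) = Conj a (conj_list as)"

definition LG :: "'a set \<Rightarrow> ('a, 'p) fm set" where
  "LG G = {conj_list (map (\<lambda>i. K i (f i)) xs) | xs f.
             distinct xs \<and> set xs = G \<and> (\<forall>i\<in>G. is_EL (f i))}"

text \<open>Propositional tautologies: formulas true under every valuation treating
  non-Boolean subformulas as atoms.\<close>
fun peval :: "(('a, 'p) fm \<Rightarrow> bool) \<Rightarrow> ('a, 'p) fm \<Rightarrow> bool" where
  "peval v (Neg a) = (\<not> peval v a)"
| "peval v (Conj a b) = (peval v a \<and> peval v b)"
| "peval v a = v a"

definition taut :: "('a, 'p) fm \<Rightarrow> bool" where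
  "taut a = (\<forall>v. peval v a)"

datatype ('a, 'p) nform =
    Hole
  | ImpN "('a, 'p) fm" "('a, 'p) nform"
  | KN 'a "('a, 'p) nform"
  | AnnN "('a, 'p) fm" "('a, 'p) nform"

fun fill :: "('a, 'p) nform \<Rightarrow> ('a, 'p) fm \<Rightarrow> ('a, 'p) fm" where
  "fill Hole c = c"
| "fill (ImpN a n) c = Imp a (fill n c)"
| "fill (KN i n) c = K i (fill n c)"
| "fill (AnnN a n) c = Ann a (fill n c)"

inductive_set CoRGAL :: "('a::finite, 'p) fm set" where
  A0: "taut a \<Longrightarrow> a \<in> CoRGAL"
| A1: "Imp (K i (Imp a b)) (Imp (K i a) (K i b)) \<in> CoRGAL"
| A2: "Imp (K i a) a \<in> CoRGAL"
| A3: "Imp (K i a) (K i (K i a)) \<in> CoRGAL"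
| A4: "Imp (Neg (K i a)) (K i (Neg (K i a))) \<in> CoRGAL"
| A5: "Iff (Ann a (Atom p)) (Imp a (Atom p)) \<in> CoRGAL"
| A6: "Iff (Ann a (Neg b)) (Imp a (Neg (Ann a b))) \<in> CoRGAL"
| A7: "Iff (Ann a (Conj b c)) (Conj (Ann a b) (Ann a c)) \<in> CoRGAL"
| A8: "Iff (Ann a (K i b)) (Imp a (K i (Ann a b))) \<in> CoRGAL"
| A9: "Iff (Ann a (Ann b c)) (Ann (Conj a (Ann a b)) c) \<in> CoRGAL"
| A10: "\<psi> \<in> LG G \<Longrightarrow> Imp (GAnn G c a) (Conj c (Ann (Conj \<psi> c) a)) \<in> CoRGAL"
| A11: "\<psi> \<in> LG G \<Longrightarrow> Imp (Coal G a) (DGAnn (- G) \<psi> a) \<in> CoRGAL"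
| R0: "Imp a b \<in> CoRGAL \<Longrightarrow> a \<in> CoRGAL \<Longrightarrow> b \<in> CoRGAL"
| R1: "a \<in> CoRGAL \<Longrightarrow> K i a \<in> CoRGAL"
| R2: "a \<in> CoRGAL \<Longrightarrow> Ann b a \<in> CoRGAL"
| R3: "a \<in> CoRGAL \<Longrightarrow> GAnn G c a \<in> CoRGAL"
| R4: "a \<in> CoRGAL \<Longrightarrow> Coal G a \<in> CoRGAL"
| R5: "(\<forall>\<psi>\<in>LG G. fill n (Conj c (Ann (Conj \<psi> c) a)) \<in> CoRGAL)
        \<Longrightarrow> fill n (GAnn G c a) \<in> CoRGAL"
| R6: "(\<forall>\<psi>\<in>LG G. fill n (DGAnn (- G) \<psi> a) \<in> CoRGAL)
        \<Longrightarrow> fill n (Coal G a) \<in> CoRGAL"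

definition is_theory :: "('a::finite, 'p) fm set \<Rightarrow> bool" where
  "is_theory x \<longleftrightarrow>
     CoRGAL \<subseteq> x
   \<and> (\<forall>a b. Imp a b \<in> x \<longrightarrow> a \<in> x \<longrightarrow> b \<in> x)
   \<and> (\<forall>n G c a. (\<forall>\<psi>\<in>LG G. fill n (Conj c (Ann (Conj \<psi> c) a)) \<in> x)
                  \<longrightarrow> fill n (GAnn G c a) \<in> x)
   \<and> (\<forall>n G a. (\<forall>\<psi>\<in>LG G. fill n (DGAnn (- G) \<psi> a) \<in> x)
                  \<longrightarrow> fill n (Coal G a) \<in> x)"

definition consistent :: "('a, 'p) fm set \<Rightarrow> bool" where
  "consistent x \<longleftrightarrow> Bot \<notin> x"

definition maximal :: "('a, 'p) fm set \<Rightarrow> bool" where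
  "maximal x \<longleftrightarrow> (\<forall>a. a \<in> x \<or> Neg a \<in> x)"

end

theory Submission
  imports Defs
begin

datatype ('s, 'a, 'p) fm2 =
    Atom2 'p
  | Neg2 "('s, 'a, 'p) fm2"
  | Conj2 "('s, 'a, 'p) fm2" "('s, 'a, 'p) fm2"
  | K2 'a "('s, 'a, 'p) fm2"
  | Ann2 "('s, 'a, 'p) fm2" "('s, 'a, 'p) fm2"
  | GAnn2 's "('s, 'a, 'p) fm2" "('s, 'a, 'p) fm2"
  | Coal2 's "('s, 'a, 'p) fm2"

instance fm2 :: (countable, countable, countable) countable
  by countable_datatype

fun enc :: "('a, 'p) fm \<Rightarrow> ('a set, 'a, 'p) fm2" where
  "enc (Atom p) = Atom2 p"
| "enc (Neg a) = Neg2 (enc a)"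
| "enc (Conj a b) = Conj2 (enc a) (enc b)"
| "enc (K i a) = K2 i (enc a)"
| "enc (Ann a b) = Ann2 (enc a) (enc b)"
| "enc (GAnn G a b) = GAnn2 G (enc a) (enc b)"
| "enc (Coal G a) = Coal2 G (enc a)"

lemma enc_inj: "inj enc"
proof (rule injI)
  fix x y :: "('a, 'p) fm"
  show "enc x = enc y \<Longrightarrow> x = y"
    by (induction x arbitrary: y; case_tac y; simp)
qed

instance fm :: (finite, countable) countable
proof
  show "\<exists>f :: ('a, 'b) fm \<Rightarrow> nat. inj f"
    using inj_compose[OF inj_to_nat enc_inj] by blast
qed

lemma thy_taut: "is_theory y \<Longrightarrow> taut t \<Longrightarrow> t \<in> y"
  unfolding is_theory_def using CoRGAL.A0 by blast

lemma thy_mp: "is_theory y \<Longrightarrow> Imp a b \<in> y \<Longrightarrow> a \<in> y \<Longrightarrow> b \<in> y"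
  unfolding is_theory_def by blast

lemma thy_t1: "is_theory y \<Longrightarrow> taut (Imp a b) \<Longrightarrow> a \<in> y \<Longrightarrow> b \<in> y"
  using thy_taut thy_mp by blast

lemma thy_t2: "is_theory y \<Longrightarrow> taut (Imp a (Imp b c)) \<Longrightarrow> a \<in> y \<Longrightarrow> b \<in> y \<Longrightarrow> c \<in> y"
  using thy_taut thy_mp by blast

definition ext :: "('a::finite,'p) fm set \<Rightarrow> ('a,'p) fm \<Rightarrow> ('a,'p) fm set" where
  "ext y f = {b. Imp f b \<in> y}"

lemma ext_theory:
  fixes y :: "('a::finite,'p) fm set"
  assumes T: "is_theory y" shows "is_theory (ext y f)"
proof -
  have c: "CoRGAL \<subseteq> ext y f"
  proof
    fix b :: "('a,'p) fm" assume "b \<in> CoRGAL"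
    then have "b \<in> y" using T unfolding is_theory_def by blast
    then show "b \<in> ext y f" unfolding ext_def
      using thy_t1[OF T, of b "Imp f b"] by (simp add: taut_def Imp_def)
  qed
  have m: "\<forall>a b. Imp a b \<in> ext y f \<longrightarrow> a \<in> ext y f \<longrightarrow> b \<in> ext y f"
  proof (intro allI impI)
    fix a b assume "Imp a b \<in> ext y f" "a \<in> ext y f"
    then show "b \<in> ext y f"
      unfolding ext_def using thy_t2[OF T, of "Imp f (Imp a b)" "Imp f a" "Imp f b"]
      by (simp add: taut_def Imp_def)
  qed
  have r5: "\<forall>n G c a. (\<forall>\<psi>\<in>LG G. fill n (Conj c (Ann (Conj \<psi> c) a)) \<in> ext y f)
                  \<longrightarrow> fill n (GAnn G c a) \<in> ext y f"
  proof (intro allI impI)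
    fix n G c a assume "\<forall>\<psi>\<in>LG G. fill n (Conj c (Ann (Conj \<psi> c) a)) \<in> ext y f"
    then have "\<forall>\<psi>\<in>LG G. fill (ImpN f n) (Conj c (Ann (Conj \<psi> c) a)) \<in> y"
      by (simp add: ext_def)
    then have "fill (ImpN f n) (GAnn G c a) \<in> y" using T unfolding is_theory_def by blast
    then show "fill n (GAnn G c a) \<in> ext y f" by (simp add: ext_def)
  qed
  have r6: "\<forall>n G a. (\<forall>\<psi>\<in>LG G. fill n (DGAnn (- G) \<psi> a) \<in> ext y f)
                  \<longrightarrow> fill n (Coal G a) \<in> ext y f"
  proof (intro allI impI)
    fix n G a assume "\<forall>\<psi>\<in>LG G. fill n (DGAnn (- G) \<psi> a) \<in> ext y f"
    then have "\<forall>\<psi>\<in>LG G. fill (ImpN f n) (DGAnn (- G) \<psi> a) \<in> y"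
      by (simp add: ext_def)
    then have "fill (ImpN f n) (Coal G a) \<in> y" using T unfolding is_theory_def by blast
    then show "fill n (Coal G a) \<in> ext y f" by (simp add: ext_def)
  qed
  show ?thesis unfolding is_theory_def using c m r5 r6 by blast
qed

lemma ext_sup: "is_theory y \<Longrightarrow> y \<subseteq> ext y f"
  unfolding ext_def using thy_t1[of y b "Imp f b" for b] by (auto simp add: taut_def Imp_def)

lemma ext_in: "is_theory y \<Longrightarrow> f \<in> ext y f"
  unfolding ext_def using thy_taut[of y "Imp f f"] by (simp add: taut_def Imp_def)

lemma ext_incons: "is_theory y \<Longrightarrow> \<not> consistent (ext y f) \<Longrightarrow> Neg f \<in> y"
  unfolding ext_def consistent_def using thy_t1[of y "Imp f Bot" "Neg f"]
  by (simp add: taut_def Imp_def Bot_def)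

lemma ext_incons2: "is_theory y \<Longrightarrow> \<not> consistent (ext y (Neg f)) \<Longrightarrow> f \<in> y"
  unfolding ext_def consistent_def using thy_t1[of y "Imp (Neg f) Bot" f]
  by (simp add: taut_def Imp_def Bot_def)

lemma contra: "is_theory y \<Longrightarrow> consistent y \<Longrightarrow> f \<in> y \<Longrightarrow> Neg f \<in> y \<Longrightarrow> False"
  unfolding consistent_def using thy_t2[of y f "Neg f" Bot]
  by (simp add: taut_def Imp_def Bot_def)

definition isGC :: "('a,'p) fm \<Rightarrow> bool" where
  "isGC X = ((\<exists>G c a. X = GAnn G c a) \<or> (\<exists>G a. X = Coal G a))"

lemma fill_uniq: "isGC X \<Longrightarrow> isGC X' \<Longrightarrow> fill n X = fill n' X' \<Longrightarrow> n = n' \<and> X = X'"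
proof (induction n arbitrary: n')
  case Hole then show ?case by (cases n') (auto simp: isGC_def Imp_def)
next
  case (ImpN x1 n) then show ?case by (cases n') (auto simp: isGC_def Imp_def)
next
  case (KN x1 n) then show ?case by (cases n') (auto simp: isGC_def Imp_def)
next
  case (AnnN x1 n) then show ?case by (cases n') (auto simp: isGC_def Imp_def)
qed

definition good :: "('a::finite,'p) fm set \<Rightarrow> ('a,'p) fm \<Rightarrow> ('a,'p) fm set \<Rightarrow> bool" where
  "good y f z = (y \<subseteq> z \<and> is_theory z \<and> consistent z \<and> (f \<in> z \<or> Neg f \<in> z)
     \<and> (\<forall>n G c a. f = fill n (GAnn G c a) \<and> f \<notin> z \<longrightarrow>
          (\<exists>\<psi>\<in>LG G. Neg (fill n (Conj c (Ann (Conj \<psi> c) a))) \<in> z))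
     \<and> (\<forall>n G a. f = fill n (Coal G a) \<and> f \<notin> z \<longrightarrow>
          (\<exists>\<psi>\<in>LG G. Neg (fill n (DGAnn (- G) \<psi> a)) \<in> z)))"

lemma good_intro:
  assumes "y \<subseteq> z" "is_theory z" "consistent z" "f \<in> z \<or> Neg f \<in> z"
   "\<forall>n G c a. f = fill n (GAnn G c a) \<and> f \<notin> z \<longrightarrow>
          (\<exists>\<psi>\<in>LG G. Neg (fill n (Conj c (Ann (Conj \<psi> c) a))) \<in> z)"
   "\<forall>n G a. f = fill n (Coal G a) \<and> f \<notin> z \<longrightarrow>
          (\<exists>\<psi>\<in>LG G. Neg (fill n (DGAnn (- G) \<psi> a)) \<in> z)"
  shows "\<exists>z. good y f z"
  using assms unfolding good_def by blast

lemma good_ex: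
  assumes T: "is_theory y" and C: "consistent y"
  shows "\<exists>z. good y f z"
proof (cases "consistent (ext y f)")
  case True
  then show ?thesis
    by (rule_tac good_intro[OF ext_sup[OF T] ext_theory[OF T]]) (use ext_in[OF T] in auto)
next
  case False
  define y' where "y' = ext y (Neg f)"
  have T': "is_theory y'" using ext_theory[OF T] y'_def by blast
  have C': "consistent y'"
    using ext_incons[OF T False] ext_incons2[OF T] contra[OF T C] y'_def by blast
  have N: "Neg f \<in> y'" using ext_in[OF T] y'_def by blast
  have S: "y \<subseteq> y'" using ext_sup[OF T] y'_def by blast
  have nf: "f \<notin> y'" using contra[OF T' C'] N by blast
  show ?thesis
  proof (cases "\<exists>n G c a. f = fill n (GAnn G c a)")
    case True
    then obtain n G c a where f: "f = fill n (GAnn G c a)" by blast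
    have "\<exists>\<psi>\<in>LG G. consistent (ext y' (Neg (fill n (Conj c (Ann (Conj \<psi> c) a)))))"
    proof (rule ccontr)
      assume "\<not> ?thesis"
      then have "\<forall>\<psi>\<in>LG G. fill n (Conj c (Ann (Conj \<psi> c) a)) \<in> y'"
        using ext_incons2[OF T'] by blast
      then have "f \<in> y'" using T' f unfolding is_theory_def by blast
      then show False using nf by blast
    qed
    then obtain \<psi> where p: "\<psi> \<in> LG G"
      and cz: "consistent (ext y' (Neg (fill n (Conj c (Ann (Conj \<psi> c) a)))))" by blast
    define z where "z = ext y' (Neg (fill n (Conj c (Ann (Conj \<psi> c) a))))"
    have Tz: "is_theory z" using ext_theory[OF T'] z_def by blast
    have Sz: "y' \<subseteq> z" using ext_sup[OF T'] z_def by blast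
    have W: "Neg (fill n (Conj c (Ann (Conj \<psi> c) a))) \<in> z" using ext_in[OF T'] z_def by blast
    have nfz: "f \<notin> z" using contra[OF Tz] cz z_def N Sz by blast
    have g1: "\<forall>n' G' c' a'. f = fill n' (GAnn G' c' a') \<and> f \<notin> z \<longrightarrow>
          (\<exists>\<psi>\<in>LG G'. Neg (fill n' (Conj c' (Ann (Conj \<psi> c') a'))) \<in> z)"
    proof (intro allI impI)
      fix n' G' c' a' assume "f = fill n' (GAnn G' c' a') \<and> f \<notin> z"
      then have "n = n' \<and> GAnn G c a = GAnn G' c' a'"
        using fill_uniq[of "GAnn G c a" "GAnn G' c' a'" n n'] f by (simp add: isGC_def)
      then show "\<exists>\<psi>\<in>LG G'. Neg (fill n' (Conj c' (Ann (Conj \<psi> c') a'))) \<in> z"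
        using p W by auto
    qed
    have g2: "\<forall>n' G' a'. f = fill n' (Coal G' a') \<and> f \<notin> z \<longrightarrow>
          (\<exists>\<psi>\<in>LG G'. Neg (fill n' (DGAnn (- G') \<psi> a')) \<in> z)"
    proof (intro allI impI)
      fix n' G' a' assume "f = fill n' (Coal G' a') \<and> f \<notin> z"
      then have "GAnn G c a = Coal G' a'"
        using fill_uniq[of "GAnn G c a" "Coal G' a'" n n'] f by (simp add: isGC_def)
      then show "\<exists>\<psi>\<in>LG G'. Neg (fill n' (DGAnn (- G') \<psi> a')) \<in> z" by simp
    qed
    show ?thesis
      apply (rule good_intro[OF _ Tz _ _ g1 g2])
      using S Sz apply (rule order_trans)
      using cz z_def apply simp
      using N Sz by blast
  next
    case NG: False
    show ?thesis
    proof (cases "\<exists>n G a. f = fill n (Coal G a)")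
      case True
      then obtain n G a where f: "f = fill n (Coal G a)" by blast
      have "\<exists>\<psi>\<in>LG G. consistent (ext y' (Neg (fill n (DGAnn (- G) \<psi> a))))"
      proof (rule ccontr)
        assume "\<not> ?thesis"
        then have "\<forall>\<psi>\<in>LG G. fill n (DGAnn (- G) \<psi> a) \<in> y'"
          using ext_incons2[OF T'] by blast
        then have "f \<in> y'" using T' f unfolding is_theory_def by blast
        then show False using nf by blast
      qed
      then obtain \<psi> where p: "\<psi> \<in> LG G"
        and cz: "consistent (ext y' (Neg (fill n (DGAnn (- G) \<psi> a))))" by blast
      define z where "z = ext y' (Neg (fill n (DGAnn (- G) \<psi> a)))"
      have Tz: "is_theory z" using ext_theory[OF T'] z_def by blast
      have Sz: "y' \<subseteq> z" using ext_sup[OF T'] z_def by blast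
      have W: "Neg (fill n (DGAnn (- G) \<psi> a)) \<in> z" using ext_in[OF T'] z_def by blast
      have g1: "\<forall>n' G' c' a'. f = fill n' (GAnn G' c' a') \<and> f \<notin> z \<longrightarrow>
            (\<exists>\<psi>\<in>LG G'. Neg (fill n' (Conj c' (Ann (Conj \<psi> c') a'))) \<in> z)"
        using NG by blast
      have g2: "\<forall>n' G' a'. f = fill n' (Coal G' a') \<and> f \<notin> z \<longrightarrow>
            (\<exists>\<psi>\<in>LG G'. Neg (fill n' (DGAnn (- G') \<psi> a')) \<in> z)"
      proof (intro allI impI)
        fix n' G' a' assume "f = fill n' (Coal G' a') \<and> f \<notin> z"
        then have "n = n' \<and> Coal G a = Coal G' a'"
          using fill_uniq[of "Coal G a" "Coal G' a'" n n'] f by (simp add: isGC_def)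
        then show "\<exists>\<psi>\<in>LG G'. Neg (fill n' (DGAnn (- G') \<psi> a')) \<in> z"
          using p W by auto
      qed
      show ?thesis
        apply (rule good_intro[OF _ Tz _ _ g1 g2])
        using S Sz apply (rule order_trans)
        using cz z_def apply simp
        using N Sz by blast
    next
      case False
      then show ?thesis
        by (rule_tac good_intro[OF S T' C']) (use N NG in auto)
    qed
  qed
qed

definition step :: "('a::finite,'p) fm set \<Rightarrow> ('a,'p) fm \<Rightarrow> ('a,'p) fm set" where
  "step y f = (SOME z. good y f z)"

lemma step_good: "is_theory y \<Longrightarrow> consistent y \<Longrightarrow> good y f (step y f)"
  unfolding step_def using good_ex someI_ex by metis

primrec chain :: "('a::finite,'p::countable) fm set \<Rightarrow> nat \<Rightarrow> ('a,'p) fm set" where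
  "chain x 0 = x"
| "chain x (Suc k) = step (chain x k) (from_nat k)"

theorem mainTheorem12:
  fixes x :: "('a::finite, 'p::countable) fm set"
  assumes "is_theory x" and "consistent x"
  shows "\<exists>y. x \<subseteq> y \<and> is_theory y \<and> consistent y \<and> maximal y"
proof -
  have tc: "is_theory (chain x k) \<and> consistent (chain x k)" for k
  proof (induction k)
    case 0 then show ?case using assms by simp
  next
    case (Suc k) then show ?case using step_good unfolding good_def by auto
  qed
  have gd: "good (chain x k) (from_nat k) (chain x (Suc k))" for k
    using tc[of k] step_good[of "chain x k" "from_nat k"] by simp
  have sub1: "chain x k \<subseteq> chain x (Suc k)" for k using gd unfolding good_def by blast
  have mono: "k \<le> m \<Longrightarrow> chain x k \<subseteq> chain x m" for k m
    using lift_Suc_mono_le[of "chain x", OF sub1] by blast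
  define Y where "Y = (\<Union>k. chain x k)"
  have two: "a \<in> Y \<Longrightarrow> b \<in> Y \<Longrightarrow> \<exists>k. a \<in> chain x k \<and> b \<in> chain x k" for a b
  proof -
    assume "a \<in> Y" "b \<in> Y"
    then obtain i j where "a \<in> chain x i" "b \<in> chain x j" unfolding Y_def by blast
    then show ?thesis using mono[of i "max i j"] mono[of j "max i j"] by auto
  qed
  have cons: "consistent Y" unfolding consistent_def Y_def
    using tc unfolding consistent_def by blast
  have noc: "a \<in> Y \<Longrightarrow> Neg a \<in> Y \<Longrightarrow> False" for a
    using two[of a "Neg a"] tc contra by blast
  have sx: "x \<subseteq> Y" unfolding Y_def using chain.simps(1) by blast
  have max: "maximal Y" unfolding maximal_def
  proof
    fix a
    have "a \<in> chain x (Suc (to_nat a)) \<or> Neg a \<in> chain x (Suc (to_nat a))"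
      using gd[of "to_nat a"] unfolding good_def by simp
    then show "a \<in> Y \<or> Neg a \<in> Y" unfolding Y_def by blast
  qed
  have wit: "f \<in> Y" if gfact: "\<And>z. good (chain x (to_nat f)) f z \<Longrightarrow> f \<notin> z \<Longrightarrow> \<exists>\<chi>. \<chi> \<in> Y \<and> Neg \<chi> \<in> z" for f
  proof (rule ccontr)
    assume nf: "f \<notin> Y"
    have g: "good (chain x (to_nat f)) f (chain x (Suc (to_nat f)))"
      using gd[of "to_nat f"] by simp
    have "f \<notin> chain x (Suc (to_nat f))" using nf unfolding Y_def by blast
    then obtain \<chi> where "\<chi> \<in> Y" "Neg \<chi> \<in> chain x (Suc (to_nat f))" using gfact g by blast
    then show False using noc unfolding Y_def by blast
  qed
  have thy: "is_theory Y" unfolding is_theory_def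
  proof (intro conjI allI impI)
    show "CoRGAL \<subseteq> Y" using sx assms(1) unfolding is_theory_def by blast
  next
    fix a b assume "Imp a b \<in> Y" "a \<in> Y"
    then obtain k where "Imp a b \<in> chain x k" "a \<in> chain x k" using two by blast
    then show "b \<in> Y" using tc thy_mp unfolding Y_def by blast
  next
    fix n G c a assume H: "\<forall>\<psi>\<in>LG G. fill n (Conj c (Ann (Conj \<psi> c) a)) \<in> Y"
    show "fill n (GAnn G c a) \<in> Y"
    proof (rule wit)
      fix z assume "good (chain x (to_nat (fill n (GAnn G c a)))) (fill n (GAnn G c a)) z"
        "fill n (GAnn G c a) \<notin> z"
      then obtain \<psi> where "\<psi> \<in> LG G" "Neg (fill n (Conj c (Ann (Conj \<psi> c) a))) \<in> z"
        unfolding good_def by blast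
      then show "\<exists>\<chi>. \<chi> \<in> Y \<and> Neg \<chi> \<in> z" using H by blast
    qed
  next
    fix n G a assume H: "\<forall>\<psi>\<in>LG G. fill n (DGAnn (- G) \<psi> a) \<in> Y"
    show "fill n (Coal G a) \<in> Y"
    proof (rule wit)
      fix z assume "good (chain x (to_nat (fill n (Coal G a)))) (fill n (Coal G a)) z"
        "fill n (Coal G a) \<notin> z"
      then obtain \<psi> where "\<psi> \<in> LG G" "Neg (fill n (DGAnn (- G) \<psi> a)) \<in> z"
        unfolding good_def by blast
      then show "\<exists>\<chi>. \<chi> \<in> Y \<and> Neg \<chi> \<in> z" using H by blast
    qed
  qed
  show ?thesis using sx thy cons max by blast
qed

end
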